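(* For every $k\ge0$, \[ \psi_k(z)=\frac{t^{k+1}}{z^{2k+1}(1-t)}\cdot\frac{\mu_3^{k+1}-\mu_2^{k+1}}{\mu_3-\mu_2} =\frac{t^{k+1}}{z^{2k+1}(1-t)}\sum_{i=0}^{\lfloor k/2\rfloor}(-1)^i\binom{k-i}{i}(2-t)^{k-2i}(1-t)^{2i}, \] and $\varphi_0(z)=\dfrac1{1-t}$, $\varphi_k(z)=\dfrac1z\psi_{k-1}(z)-\psi_{k-2}(z)$ for $k\ge1$ (with $\psi_{-1}=0$).
   Context: The numbers $c_{n,k},d_{n,k}$ ($n,k\ge0$) count partial reverse S-Motzkin paths (S-Motzkin paths read from right to left, stopped after $n$ steps) ending at height $k$ whose last non-up step is a level step, resp. a down step; equivalently they are defined by $c_{0,0}=1$, $d_{0,0}=0$, $c_{0,k}=d_{0,k}=0$ for $k\ge1$, and for $n\ge1$, $k\ge0$: $c_{n,k}=c_{n-1,k-1}+d_{n-1,k}$, $d_{n,k}=d_{n-1,k-1}+c_{n-1,k+1}$, with $c_{n-1,-1}=d_{n-1,-1}=0$. $\varphi_k(z)=\sum_{n\ge0}c_{n,k}z^n$, $\psi_k(z)=\sum_{n\ge0}d_{n,k}z^n$. $t$ is the power series in $z$ with $z^3=t(1-t)^2$, $t=z^3+O(z^6)$; $\mu_2,\mu_3$ are the roots of $X^2-(2-t)X+(1-t)^2$ (explicitly $\mu_{2,3}=(2-t\mp\sqrt{4t-3t^2})/2$). *)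

theory Defs
  imports "HOL-Computational_Algebra.Formal_Power_Series"
begin

text \<open>The counting numbers c(n,k), d(n,k) (n steps, height k).\<close>
fun cc :: "nat \<Rightarrow> nat \<Rightarrow> nat" and dd :: "nat \<Rightarrow> nat \<Rightarrow> nat" where
  "cc 0 k = (if k = 0 then 1 else 0)"
| "cc (Suc n) k = (if k = 0 then 0 else cc n (k - 1)) + dd n k"
| "dd 0 k = 0"
| "dd (Suc n) k = (if k = 0 then 0 else dd n (k - 1)) + cc n (k + 1)"

definition phi :: "nat \<Rightarrow> real fps" where
  "phi k = Abs_fps (\<lambda>n. real (cc n k))"

definition psi :: "nat \<Rightarrow> real fps" where
  "psi k = Abs_fps (\<lambda>n. real (dd n k))"

end

theory Submission imports Defs begin

definition TT :: "nat \<Rightarrow> 'a::comm_ring_1 \<Rightarrow> 'a \<Rightarrow> 'a" where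
  "TT k s p = (\<Sum>i = 0..k div 2. (-1)^i * of_nat ((k-i) choose i) * s^(k-2*i) * p^i)"

definition gT :: "'a::comm_ring_1 \<Rightarrow> 'a \<Rightarrow> nat \<Rightarrow> nat \<Rightarrow> 'a" where
  "gT s p n i = (-1)^i * of_nat ((n-i) choose i) * s^(n-2*i) * p^i"

lemma TT_eq: assumes "n div 2 < N" shows "TT n s p = (\<Sum>i<N. gT s p n i)"
proof -
  have "TT n s p = (\<Sum>i\<in>{0..n div 2}. gT s p n i)" by (simp add: TT_def gT_def)
  also have "\<dots> = (\<Sum>i<N. gT s p n i)"
  proof (rule sum.mono_neutral_left)
    show "{0..n div 2} \<subseteq> {..<N}" using assms by auto
    show "\<forall>i\<in>{..<N} - {0..n div 2}. gT s p n i = 0"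
    proof
      fix i assume "i \<in> {..<N} - {0..n div 2}"
      then have "n - i < i" by auto
      then show "gT s p n i = 0" by (simp add: gT_def binomial_eq_0)
    qed
  qed auto
  finally show ?thesis .
qed

lemma gT_rec0: "gT s p (Suc (Suc n)) 0 = s * gT s p (Suc n) 0"
  by (simp add: gT_def)

lemma gT_rec: "gT s p (Suc (Suc n)) (Suc i) = s * gT s p (Suc n) (Suc i) - p * gT s p n i"
proof (cases "i \<le> n")
  case True
  have b: "((Suc n - i) choose (Suc i)) = ((n - i) choose (Suc i)) + ((n - i) choose i)"
    using True by (simp add: Suc_diff_le)
  show ?thesis
  proof (cases "2*i+1 \<le> n")
    case True
    have e: "Suc n - 2 * Suc i = n - 2*i - 1" "n - 2*i = Suc (n - 2*i - 1)" using True by auto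
    show ?thesis unfolding gT_def using b e
      by (simp add: algebra_simps)
  next
    case False
    then have z: "((n - i) choose (Suc i)) = 0" by simp
    show ?thesis unfolding gT_def using b by (simp add: algebra_simps z)
  qed
next
  case False
  then have "i \<noteq> 0" by auto
  with False show ?thesis by (cases i) (simp_all add: gT_def)
qed

lemma TT_0[simp]: "TT 0 s p = 1" by (simp add: TT_def)
lemma TT_1[simp]: "TT (Suc 0) s p = s" by (simp add: TT_def)

lemma TT_rec: "TT (Suc (Suc n)) s p = s * TT (Suc n) s p - p * TT n s p"
proof -
  have "TT (Suc (Suc n)) s p = (\<Sum>i<Suc (Suc (Suc n)). gT s p (Suc (Suc n)) i)"
    by (rule TT_eq) simp
  also have "\<dots> = gT s p (Suc (Suc n)) 0 + (\<Sum>i<Suc (Suc n). gT s p (Suc (Suc n)) (Suc i))"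
    by (rule sum.lessThan_Suc_shift)
  also have "\<dots> = s * (gT s p (Suc n) 0 + (\<Sum>i<Suc (Suc n). gT s p (Suc n) (Suc i)))
                  - p * (\<Sum>i<Suc (Suc n). gT s p n i)"
    by (simp add: gT_rec0 gT_rec sum_subtractf sum_distrib_left algebra_simps)
  also have "gT s p (Suc n) 0 + (\<Sum>i<Suc (Suc n). gT s p (Suc n) (Suc i)) = (\<Sum>i<Suc (Suc (Suc n)). gT s p (Suc n) i)"
    by (rule sum.lessThan_Suc_shift[symmetric])
  also have "\<dots> = TT (Suc n) s p" by (rule TT_eq[symmetric]) simp
  also have "(\<Sum>i<Suc (Suc n). gT s p n i) = TT n s p" by (rule TT_eq[symmetric]) simp
  finally show ?thesis .
qed

lemma TT_roots: "(m3 - m2) * TT k (m2 + m3) (m2 * m3) = m3^(k+1) - m2^(k+1)"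
proof (induction k rule: nat_less_induct)
  case (1 k)
  show ?case
  proof (cases k)
    case 0 then show ?thesis by simp
  next
    case (Suc j)
    show ?thesis
    proof (cases j)
      case 0 then show ?thesis using Suc by (simp add: algebra_simps power2_eq_square)
    next
      case (Suc i)
      have h1: "(m3 - m2) * TT (Suc i) (m2 + m3) (m2 * m3) = m3^(i+2) - m2^(i+2)"
        using 1 Suc \<open>k = Suc j\<close> by simp
      have h2: "(m3 - m2) * TT i (m2 + m3) (m2 * m3) = m3^(i+1) - m2^(i+1)"
        using 1 Suc \<open>k = Suc j\<close> by simp
      have "(m3 - m2) * TT k (m2 + m3) (m2 * m3) = (m2+m3) * ((m3 - m2) * TT (Suc i) (m2 + m3) (m2 * m3))
          - (m2*m3) * ((m3 - m2) * TT i (m2 + m3) (m2 * m3))"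
        using Suc \<open>k = Suc j\<close> by (simp add: TT_rec algebra_simps)
      also have "\<dots> = m3^(k+1) - m2^(k+1)" unfolding h1 h2 using Suc \<open>k = Suc j\<close>
        by (simp add: algebra_simps)
      finally show ?thesis .
    qed
  qed
qed

lemma TT_compose:
  fixes s p c :: "'a::idom fps"
  assumes "fps_nth c 0 = 0"
  shows "TT k s p oo c = TT k (s oo c) (p oo c)"
proof (induction k rule: nat_less_induct)
  case (1 k)
  show ?case
  proof (cases k)
    case 0 then show ?thesis by simp
  next
    case (Suc j)
    show ?thesis
    proof (cases j)
      case 0 then show ?thesis using Suc by simp
    next
      case (Suc i)
      then show ?thesis using 1 \<open>k = Suc j\<close>
        by (simp add: TT_rec fps_compose_sub_distrib fps_compose_mult_distrib[OF assms])
    qed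
  qed
qed


lemma E4_alg:
  fixes X g t a b T0 T1 :: "'a::idom"
  assumes "g * (1 - t) = 1"
  shows "X^3*a * (g^5*b) * T1 = X * (X^2*a * (g^3*b) * T0) + X * (X^2*a * (g^5*b) * (T1 - (1-t)^2*T0))"
  using assms by algebra

lemma E2a_alg:
  fixes X g t :: "'a::idom"
  assumes "g * (1 - t) = 1" "X^3 = t*(1-t)^2"
  shows "X * g^3 = X * g + X * (X^3 * g^5 * (2-t))"
  using assms by algebra

lemma E2b_alg:
  fixes X g t :: "'a::idom"
  assumes "g * (1 - t) = 1" "X^3 = t*(1-t)^2"
  shows "X^2 * g^5 * ((2-t) - (1-t)^2) = X * (X * g^3) + X * (X^4 * g^7 * ((2-t)*(2-t) - (1-t)^2))"
  using assms by algebra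

lemma E2c_alg:
  fixes X g t a b T0 T1 :: "'a::idom"
  assumes "g * (1 - t) = 1" "X^3 = t*(1-t)^2"
  shows "X^3*a * (g^7*b) * (((2-t)*T1 - (1-t)^2*T0) - (1-t)^2*T1)
     = X * (X^2*a * (g^5*b) * (T1 - (1-t)^2*T0)) + X * (X^5*a * (g^9*b) * ((2-t)*((2-t)*T1 - (1-t)^2*T0) - (1-t)^2 * T1))"
  using assms by algebra


definition Psi :: "real fps \<Rightarrow> nat \<Rightarrow> real fps" where
  "Psi t k = fps_X^(k+2) * inverse (1-t)^(2*k+3) * TT k (2-t) ((1-t)^2)"
definition RR :: "real fps \<Rightarrow> nat \<Rightarrow> real fps" where
  "RR t j = (if j = 0 then 1 else TT j (2-t) ((1-t)^2) - (1-t)^2 * TT (j-1) (2-t) ((1-t)^2))"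
definition Phi :: "real fps \<Rightarrow> nat \<Rightarrow> real fps" where
  "Phi t k = (if k = 0 then inverse (1-t) else fps_X^k * inverse (1-t)^(2*k+1) * RR t (k-1))"

lemma Psi_Suc: "Psi t (Suc k) = fps_X^k * fps_X^3 * (inverse (1-t)^(2*k) * inverse (1-t)^5) * TT (Suc k) (2-t) ((1-t)^2)"
proof -
  have e: "Suc k + 2 = k+3" "2*Suc k + 3 = 2*k+5" by simp_all
  show ?thesis unfolding Psi_def e power_add by (simp only: ac_simps)
qed
lemma Psi_k: "Psi t k = fps_X^k * fps_X^2 * (inverse (1-t)^(2*k) * inverse (1-t)^3) * TT k (2-t) ((1-t)^2)"
  unfolding Psi_def power_add by (simp only: ac_simps)
lemma Phi_SS: "Phi t (Suc (Suc k)) = fps_X^k * fps_X^2 * (inverse (1-t)^(2*k) * inverse (1-t)^5) * RR t (Suc k)"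
proof -
  have h: "Phi t (Suc (Suc k)) = fps_X^(Suc (Suc k)) * inverse (1-t)^(2*Suc (Suc k)+1) * RR t (Suc k)"
    unfolding Phi_def by simp
  have e1: "Suc (Suc k) = k + 2" "2*Suc (Suc k)+1 = 2*k+5" by simp_all
  show ?thesis unfolding h unfolding e1(2) unfolding e1(1) power_add by (simp only: ac_simps)
qed


lemma Psi_gen: "Psi t (i+c) = fps_X^i * fps_X^(c+2) * (inverse (1-t)^(2*i) * inverse (1-t)^(2*c+3)) * TT (i+c) (2-t) ((1-t)^2)"
proof -
  have e: "i + c + 2 = i + (c+2)" "2*(i+c)+3 = 2*i + (2*c+3)" by simp_all
  show ?thesis unfolding Psi_def e power_add by (simp only: ac_simps)
qed

lemma Phi_gen: assumes "1 \<le> c" shows "Phi t (i+c) = fps_X^i * fps_X^c * (inverse (1-t)^(2*i) * inverse (1-t)^(2*c+1)) * RR t (i+c-1)"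
proof -
  have h: "Phi t (i+c) = fps_X^(i+c) * inverse (1-t)^(2*(i+c)+1) * RR t (i+c-1)"
    unfolding Phi_def using assms by simp
  have e: "2*(i+c)+1 = 2*i + (2*c+1)" by simp
  show ?thesis unfolding h unfolding e power_add by (simp only: ac_simps)
qed

lemma Psi_gen': "c+2 = a \<Longrightarrow> 2*c+3 = b \<Longrightarrow> Psi t (i+c) = fps_X^i * fps_X^a * (inverse (1-t)^(2*i) * inverse (1-t)^b) * TT (i+c) (2-t) ((1-t)^2)"
  using Psi_gen by blast
lemma Phi_gen': "1 \<le> c \<Longrightarrow> 2*c+1 = b \<Longrightarrow> i+c-1 = j \<Longrightarrow> Phi t (i+c) = fps_X^i * fps_X^c * (inverse (1-t)^(2*i) * inverse (1-t)^b) * RR t j"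
  using Phi_gen by blast

lemma RR_Suc: "RR t (Suc j) = TT (Suc j) (2-t) ((1-t)^2) - (1-t)^2 * TT j (2-t) ((1-t)^2)"
  by (simp add: RR_def)

lemma E4_alg':
  fixes X g t a b T0 T1 :: "real fps"
  assumes "g * (1 - t) = 1"
  shows "a * X^3 * (b * g^5) * T1 = X * (a * X^2 * (b * g^3) * T0) + X * (a * X^2 * (b * g^5) * (T1 - (1-t)^2*T0))"
  using assms by algebra

lemma E2c_alg':
  fixes X g t a b T0 T1 :: "real fps"
  assumes "g * (1 - t) = 1" "X^3 = t*(1-t)^2"
  shows "a*X^3*(b*g^7)*(((2-t)*T1 - (1-t)^2*T0) - (1-t)^2*T1)
     = X*(a*X^2*(b*g^5)*(T1 - (1-t)^2*T0)) + X*(a*X^5*(b*g^9)*((2-t)*((2-t)*T1 - (1-t)^2*T0) - (1-t)^2*T1))"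
  using assms by algebra

context
  fixes t :: "real fps"
  assumes hX: "fps_X^3 = t*(1-t)^2" and hg: "inverse (1-t) * (1-t) = 1"
begin

lemma E1: "Phi t 0 = 1 + fps_X * Psi t 0"
proof -
  have "Psi t 0 = fps_X^2 * inverse (1-t)^3" by (simp add: Psi_def power2_eq_square)
  moreover have "Phi t 0 = inverse (1-t)" by (simp add: Phi_def)
  ultimately show ?thesis using hX hg by algebra
qed

lemma E3: "Psi t 0 = fps_X * Phi t 1"
  by (simp add: Psi_def Phi_def RR_def power2_eq_square)

lemma E4: "Psi t (k+1) = fps_X * Psi t k + fps_X * Phi t (k+2)"
proof -
  have a: "Psi t (k+1) = fps_X^k * fps_X^3 * (inverse (1-t)^(2*k) * inverse (1-t)^5) * TT (k+1) (2-t) ((1-t)^2)"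
    by (rule Psi_gen') simp_all
  have b: "Psi t k = fps_X^k * fps_X^2 * (inverse (1-t)^(2*k) * inverse (1-t)^3) * TT k (2-t) ((1-t)^2)"
    by (rule Psi_k)
  have c: "Phi t (k+2) = fps_X^k * fps_X^2 * (inverse (1-t)^(2*k) * inverse (1-t)^5) * RR t (k+1)"
    by (rule Phi_gen') simp_all
  have d: "RR t (k+1) = TT (k+1) (2-t) ((1-t)^2) - (1-t)^2 * TT k (2-t) ((1-t)^2)"
    using RR_Suc[of t k] by simp
  show ?thesis unfolding a b c d by (rule E4_alg'[OF hg])
qed

lemma E2_0: "Phi t 1 = fps_X * Phi t 0 + fps_X * Psi t 1"
proof -
  have a: "Phi t 1 = fps_X * inverse (1-t)^3" by (simp add: Phi_def RR_def)
  have b: "Phi t 0 = inverse (1-t)" by (simp add: Phi_def)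
  have c: "Psi t 1 = fps_X^3 * inverse (1-t)^5 * (2-t)" by (simp add: Psi_def TT_def eval_nat_numeral)
  show ?thesis unfolding a b c by (rule E2a_alg[OF hg hX])
qed

lemma E2_1: "Phi t 2 = fps_X * Phi t 1 + fps_X * Psi t 2"
proof -
  have a: "Phi t 2 = fps_X^2 * inverse (1-t)^5 * ((2-t) - (1-t)^2)"
    by (simp add: Phi_def RR_def eval_nat_numeral)
  have b: "Phi t 1 = fps_X * inverse (1-t)^3" by (simp add: Phi_def RR_def)
  have c: "Psi t 2 = fps_X^4 * inverse (1-t)^7 * ((2-t)*(2-t) - (1-t)^2)"
    using TT_rec[of 0 "2-t" "(1-t)^2"] by (simp add: Psi_def eval_nat_numeral)
  show ?thesis unfolding a b c by (rule E2b_alg[OF hg hX])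
qed

lemma E2_SS: "Phi t (i+3) = fps_X * Phi t (i+2) + fps_X * Psi t (i+3)"
proof -
  define T0 where "T0 = TT i (2-t) ((1-t)^2)"
  define T1 where "T1 = TT (i+1) (2-t) ((1-t)^2)"
  have T2: "TT (i+2) (2-t) ((1-t)^2) = (2-t)*T1 - (1-t)^2*T0"
    using TT_rec[of i "2-t" "(1-t)^2"] by (simp add: T0_def T1_def)
  have T3: "TT (i+3) (2-t) ((1-t)^2) = (2-t)*((2-t)*T1 - (1-t)^2*T0) - (1-t)^2*T1"
    using TT_rec[of "i+1" "2-t" "(1-t)^2"] T2 by (simp add: T0_def T1_def numeral_3_eq_3)
  have R2: "RR t (i+2) = ((2-t)*T1 - (1-t)^2*T0) - (1-t)^2*T1"
    using RR_Suc[of t "i+1"] T2 by (simp add: T1_def)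
  have R1: "RR t (i+1) = T1 - (1-t)^2*T0"
    using RR_Suc[of t i] by (simp add: T1_def T0_def)
  have a: "Phi t (i+3) = fps_X^i * fps_X^3 * (inverse (1-t)^(2*i) * inverse (1-t)^7) * RR t (i+2)"
    by (rule Phi_gen') simp_all
  have b: "Phi t (i+2) = fps_X^i * fps_X^2 * (inverse (1-t)^(2*i) * inverse (1-t)^5) * RR t (i+1)"
    by (rule Phi_gen') simp_all
  have c: "Psi t (i+3) = fps_X^i * fps_X^5 * (inverse (1-t)^(2*i) * inverse (1-t)^9) * TT (i+3) (2-t) ((1-t)^2)"
    by (rule Psi_gen') simp_all
  show ?thesis unfolding a b c R2 R1 T3 by (rule E2c_alg'[OF hg hX])
qed

lemma E2: "Phi t (k+1) = fps_X * Phi t k + fps_X * Psi t (k+1)"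
proof -
  consider "k = 0" | "k = 1" | i where "k = i + 2" by (metis add_2_eq_Suc' not0_implies_Suc One_nat_def)
  then show ?thesis
  proof cases
    case 1 then show ?thesis using E2_0 by simp
  next
    case 2 then show ?thesis using E2_1 by (simp add: numeral_2_eq_2)
  next
    case 3 then show ?thesis using E2_SS[of i] by (simp add: numeral_3_eq_3 numeral_2_eq_2)
  qed
qed

end

lemma coeffs:
  fixes t :: "real fps"
  assumes hX: "fps_X^3 = t*(1-t)^2" and h0: "fps_nth t 0 = 0"
  shows "\<forall>k. fps_nth (Phi t k) n = real (cc n k) \<and> fps_nth (Psi t k) n = real (dd n k)"
proof -
  have hg: "inverse (1-t) * (1-t) = 1" using h0 by (intro inverse_mult_eq_1) simp
  show ?thesis
  proof (induction n)
    case 0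
    show ?case
    proof
      fix k
      have "fps_nth (Psi t k) 0 = 0" by (simp add: Psi_def)
      moreover have "fps_nth (Phi t k) 0 = (if k = 0 then 1 else 0)"
        using h0 by (simp add: Phi_def)
      ultimately show "fps_nth (Phi t k) 0 = real (cc 0 k) \<and> fps_nth (Psi t k) 0 = real (dd 0 k)"
        by simp
    qed
  next
    case (Suc n)
    show ?case
    proof
      fix k
      show "fps_nth (Phi t k) (Suc n) = real (cc (Suc n) k) \<and> fps_nth (Psi t k) (Suc n) = real (dd (Suc n) k)"
      proof (cases k)
        case 0
        have a: "fps_nth (Phi t 0) (Suc n) = fps_nth (Psi t 0) n"
          by (subst E1[OF hX hg]) simp
        have b: "fps_nth (Psi t 0) (Suc n) = fps_nth (Phi t 1) n"
          by (subst E3[OF hX hg]) simp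
        show ?thesis using a b Suc 0 by simp
      next
        case (Suc j)
        have a: "fps_nth (Phi t (j+1)) (Suc n) = fps_nth (Phi t j) n + fps_nth (Psi t (j+1)) n"
          by (subst E2[OF hX hg]) simp
        have b: "fps_nth (Psi t (j+1)) (Suc n) = fps_nth (Psi t j) n + fps_nth (Phi t (j+2)) n"
          by (subst E4[OF hX hg]) simp
        show ?thesis using a b Suc.IH \<open>k = Suc j\<close> by simp
      qed
    qed
  qed
qed

lemma psi_Psi: "fps_X^3 = t*(1-t)^2 \<Longrightarrow> fps_nth t 0 = 0 \<Longrightarrow> psi k = Psi t k"
  using coeffs[of t] by (intro fps_ext) (simp add: psi_def)
lemma phi_Phi: "fps_X^3 = t*(1-t)^2 \<Longrightarrow> fps_nth t 0 = 0 \<Longrightarrow> phi k = Phi t k"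
  using coeffs[of t] by (intro fps_ext) (simp add: phi_def)

theorem mainTheorem7:
  fixes t :: "real fps" and k :: nat
  assumes t_eq: "fps_X ^ 3 = t * (1 - t)^2"
    and t_init: "\<forall>n<6. fps_nth t n = (if n = 3 then 1 else 0)"
  shows "(psi k = t ^ (k + 1) / (fps_X ^ (2 * k + 1) * (1 - t)) *
           (\<Sum>i = 0..k div 2. (-1) ^ i * of_nat ((k - i) choose i)
               * (2 - t) ^ (k - 2 * i) * (1 - t) ^ (2 * i)))
    \<and> (\<forall>m2 m3 :: real fps.
           m2 + m3 = 2 - fps_compose t (fps_X ^ 2)
         \<and> m2 * m3 = (1 - fps_compose t (fps_X ^ 2))^2
         \<and> m2 \<noteq> m3
         \<longrightarrow> fps_compose (psi k) (fps_X ^ 2) =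
              fps_compose t (fps_X ^ 2) ^ (k + 1)
                / ((fps_X ^ 2) ^ (2 * k + 1) * (1 - fps_compose t (fps_X ^ 2)))
              * ((m3 ^ (k + 1) - m2 ^ (k + 1)) / (m3 - m2)))
    \<and> phi 0 = inverse (1 - t)
    \<and> (1 \<le> k \<longrightarrow>
           phi k = psi (k - 1) / fps_X - (if 2 \<le> k then psi (k - 2) else 0))"
proof -
  have h0: "fps_nth t 0 = 0" using t_init by auto
  have hg: "inverse (1-t) * (1-t) = 1" using h0 by (intro inverse_mult_eq_1) simp
  note psiP = psi_Psi[OF t_eq h0] and phiP = phi_Phi[OF t_eq h0]
  define g where "g = inverse (1-t)"
  define Q where "Q = fps_X^(k+2) * g^(2*k+3)"
  define D where "D = (fps_X::real fps)^(2*k+1) * (1-t)"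
  define S where "S = TT k (2-t) ((1-t)^2)"
  have hg': "g * (1-t) = 1" using hg by (simp add: g_def)
  have sumS: "(\<Sum>i = 0..k div 2. (-1) ^ i * of_nat ((k - i) choose i)
               * (2 - t) ^ (k - 2 * i) * (1 - t) ^ (2 * i)) = S"
    unfolding S_def TT_def power_mult ..
  have psiQ: "psi k = Q * S" unfolding psiP Psi_def Q_def S_def g_def ..
  have nz: "1 - t \<noteq> 0"
  proof
    assume "1 - t = 0"
    then have "fps_nth (1-t) 0 = 0" by simp
    with h0 show False by simp
  qed
  have D0: "D \<noteq> 0" unfolding D_def using nz by simp
  have DQ: "D * Q = t^(k+1)"
  proof -
    have e: "2*k+1+(k+2) = 3*(k+1)" by simp
    have "D * Q = (fps_X^3)^(k+1) * ((1-t) * g^(2*k+3))"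
    proof -
      have x: "fps_X^(2*k+1) * fps_X^(k+2) = ((fps_X::real fps)^3)^(k+1)"
        by (simp only: power_add[symmetric] power_mult[symmetric] e)
      show ?thesis unfolding D_def Q_def x[symmetric] by (simp only: ac_simps)
    qed
    also have "\<dots> = t^(k+1) * ((1-t)^(2*k+3) * g^(2*k+3))"
    proof -
      have e2: "2*(k+1) = 2*k+2" by simp
      have y: "((fps_X::real fps)^3)^(k+1) = t^(k+1) * (1-t)^(2*k+2)"
        unfolding t_eq power_mult_distrib power_mult[symmetric] e2 ..
      have z: "(1-t)^(2*k+3) = (1-t)^(2*k+2) * (1-t)"
        by (metis power_Suc2 add_Suc_right numeral_3_eq_3 numeral_2_eq_2)
      show ?thesis unfolding y z by (simp only: ac_simps)
    qed
    also have "(1-t)^(2*k+3) * g^(2*k+3) = 1"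
      unfolding power_mult_distrib[symmetric] using hg' by (simp add: ac_simps)
    finally show ?thesis by simp
  qed
  have part1: "psi k = t ^ (k + 1) / (fps_X ^ (2 * k + 1) * (1 - t)) * S"
    unfolding psiQ DQ[symmetric] D_def[symmetric] using D0 by simp
  have part4: "1 \<le> k \<longrightarrow> phi k = psi (k - 1) / fps_X - (if 2 \<le> k then psi (k - 2) else 0)"
  proof
    assume k1: "1 \<le> k"
    show "phi k = psi (k - 1) / fps_X - (if 2 \<le> k then psi (k - 2) else 0)"
    proof (cases "k = 1")
      case True
      have "Psi t 0 = fps_X * Phi t 1" by (rule E3[OF t_eq hg])
      then have "Psi t 0 / fps_X = Phi t 1"
        by (simp only: nonzero_mult_div_cancel_left[OF fps_X_neq_zero])
      then show ?thesis using True by (simp add: psiP phiP)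
    next
      case False
      then obtain j where j: "k = j + 2" using k1 by (metis add_2_eq_Suc' le_add_diff_inverse2 One_nat_def
            Suc_lessI le_less plus_1_eq_Suc less_imp_Suc_add add.commute)
      have "Psi t (j+1) = fps_X * (Psi t j + Phi t (j+2))"
        using E4[OF t_eq hg, of j] by (simp add: algebra_simps)
      then have "Psi t (j+1) / fps_X = Psi t j + Phi t (j+2)"
        by (simp only: nonzero_mult_div_cancel_left[OF fps_X_neq_zero])
      then show ?thesis using j by (simp add: psiP phiP)
    qed
  qed
  have part2: "\<forall>m2 m3 :: real fps.
           m2 + m3 = 2 - fps_compose t (fps_X ^ 2)
         \<and> m2 * m3 = (1 - fps_compose t (fps_X ^ 2))^2
         \<and> m2 \<noteq> m3
         \<longrightarrow> fps_compose (psi k) (fps_X ^ 2) =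
              fps_compose t (fps_X ^ 2) ^ (k + 1)
                / ((fps_X ^ 2) ^ (2 * k + 1) * (1 - fps_compose t (fps_X ^ 2)))
              * ((m3 ^ (k + 1) - m2 ^ (k + 1)) / (m3 - m2))"
  proof (intro allI impI)
    fix m2 m3 :: "real fps"
    assume m: "m2 + m3 = 2 - fps_compose t (fps_X ^ 2)
         \<and> m2 * m3 = (1 - fps_compose t (fps_X ^ 2))^2 \<and> m2 \<noteq> m3"
    define c :: "real fps" where "c = fps_X^2"
    have c0: "fps_nth c 0 = 0" by (simp add: c_def)
    define t' where "t' = fps_compose t c"
    have Sc: "fps_compose S c = TT k (m2+m3) (m2*m3)"
    proof -
      have p: "((1-t)^2) oo c = (1 - t')^2"
        unfolding fps_compose_power[OF c0, symmetric] t'_def fps_compose_sub_distrib by simp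
      have q: "(2-t) oo c = 2 - t'"
        unfolding t'_def fps_compose_sub_distrib by simp
      show ?thesis unfolding S_def TT_compose[OF c0] p q using m by (simp add: t'_def c_def)
    qed
    have Dc: "fps_compose D c = (fps_X ^ 2) ^ (2 * k + 1) * (1 - t')"
    proof -
      have "fps_X^(2*k+1) oo c = (fps_X oo c)^(2*k+1)"
        by (rule fps_compose_power[OF c0, symmetric])
      also have "fps_X oo c = c" using c0 by simp
      finally have a: "fps_X^(2*k+1) oo c = c^(2*k+1)" .
      have b: "(1 - t) oo c = 1 - t'" unfolding t'_def fps_compose_sub_distrib by simp
      show ?thesis unfolding D_def fps_compose_mult_distrib[OF c0] a b by (simp only: c_def)
    qed
    have nz': "1 - t' \<noteq> 0"
    proof
      assume "1 - t' = 0"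
      then have "fps_nth (1-t') 0 = 0" by simp
      with h0 show False by (simp add: t'_def)
    qed
    have Dc0: "fps_compose D c \<noteq> 0"
      unfolding Dc using nz' by simp
    have tc: "t'^(k+1) = fps_compose D c * fps_compose Q c"
      unfolding t'_def fps_compose_power[OF c0] DQ[symmetric] fps_compose_mult_distrib[OF c0] ..
    have mm: "m3 - m2 \<noteq> 0" using m by auto
    have r: "(m3 ^ (k + 1) - m2 ^ (k + 1)) / (m3 - m2) = TT k (m2+m3) (m2*m3)"
      unfolding TT_roots[symmetric] using mm by simp
    have "fps_compose (psi k) (fps_X^2) = fps_compose Q c * fps_compose S c"
      unfolding psiQ c_def by (simp add: fps_compose_mult_distrib)
    also have "\<dots> = t'^(k+1) / ((fps_X ^ 2) ^ (2 * k + 1) * (1 - t')) * ((m3 ^ (k + 1) - m2 ^ (k + 1)) / (m3 - m2))"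
      unfolding r Sc tc Dc[symmetric] using Dc0 by simp
    finally show "fps_compose (psi k) (fps_X ^ 2) =
              fps_compose t (fps_X ^ 2) ^ (k + 1)
                / ((fps_X ^ 2) ^ (2 * k + 1) * (1 - fps_compose t (fps_X ^ 2)))
              * ((m3 ^ (k + 1) - m2 ^ (k + 1)) / (m3 - m2))" unfolding t'_def c_def .
  qed
  have part3: "phi 0 = inverse (1 - t)" by (simp add: phiP Phi_def)
  show ?thesis using part1 part2 part3 part4 sumS by simp
qed

end
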